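(* Let $G$ be a graph and $k\in\mathbb{N}$. If $\mathcal{D}$ is a $k$-tight tree-partition of $G$ that has a $k$-splittable torso, then there is a $k$-tight tree-partition $\mathcal{D}'$ of $G$ with $\mathbf{w}(\mathcal{D}')<\mathbf{w}(\mathcal{D})$.
   Context: All graphs are finite, undirected, loopless, may have parallel edges; degrees count edges with multiplicity and $\Delta(H)$ is the maximum degree of $H$. A tree-partition of $G$ is a pair $(T,\mathcal{B})$ with $T$ a tree and $\mathcal{B}=\{B_t: t\in V(T)\}$ a family of pairwise disjoint, possibly empty, subsets of $V(G)$ whose union is $V(G)$. For $e\in E(T)$, with $T_1,T_2$ the components of $T-e$ and $V_i=\bigcup_{t\in V(T_i)}B_t$, $\mathbf{cross}(e)$ is the set of edges of $G$ between $V_1$ and $V_2$; the adhesion is $\max_{e\in E(T)}|\mathbf{cross}(e)|$. For $t\in V(T)$, with $T_1,\dots,T_q$ the components of $T-t$, the torso $Z_t$ is obtained from $G$ by identifying, for each $i$, all vertices of $\bigcup_{h\in V(T_i)}B_h$ into a single new vertex (a satellite), keeping parallel edges and deleting loops. The strength of the tree-partition is $\min_{t\in V(T)}\Delta(Z_t)$. A tree-partition is $k$-tight if its adhesion is at most $k$ and its strength is at least $k+1$. A torso $Z_t$ is $k$-splittable if it has a cut $(X,V(Z_t)\setminus X)$ with at most $k$ crossing edges such that both $X$ and $V(Z_t)\setminus X$ contain a vertex of degree at least $k+1$ in $Z_t$. For a tree-partition $\mathcal{D}$, $\mathbf{s}_{\mathcal{D}}(t)$ is the number of vertices of $B_t$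 of degree at least $k+1$ in $G$, and $\mathbf{w}(\mathcal{D})=\sum_{t\in V(T)}(\mathbf{s}_{\mathcal{D}}(t)-1)$. *)

theory Defs
  imports Main "HOL-Library.Multiset"
begin

text \<open>A multigraph is a finite vertex set V together with a multiset E of edges;
each edge is a 2-element subset of V (loopless, parallel edges allowed via multiplicity).\<close>

definition mgraph :: "'v set \<Rightarrow> 'v set multiset \<Rightarrow> bool" where
  "mgraph V E \<longleftrightarrow> finite V \<and> (\<forall>e\<in>#E. card e = 2 \<and> e \<subseteq> V)"

definition deg :: "'v set multiset \<Rightarrow> 'v \<Rightarrow> nat" where
  "deg E v = size (filter_mset (\<lambda>e. v \<in> e) E)"

definition max_deg :: "'v set \<Rightarrow> 'v set multiset \<Rightarrow> nat" where
  "max_deg V E = Max (insert 0 (deg E ` V))"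

definition cut_edges :: "'v set multiset \<Rightarrow> 'v set \<Rightarrow> 'v set \<Rightarrow> nat" where
  "cut_edges E X Y = size (filter_mset (\<lambda>e. e \<inter> X \<noteq> {} \<and> e \<inter> Y \<noteq> {}) E)"

definition tcycle :: "'n set set \<Rightarrow> 'n list \<Rightarrow> bool" where
  "tcycle TE cs \<longleftrightarrow> length cs \<ge> 3 \<and> distinct cs
     \<and> (\<forall>i < length cs - 1. {cs ! i, cs ! (i+1)} \<in> TE) \<and> {last cs, hd cs} \<in> TE"

definition stree :: "'n set \<Rightarrow> 'n set set \<Rightarrow> bool" where
  "stree N TE \<longleftrightarrow> finite N \<and> N \<noteq> {} \<and> (\<forall>e\<in>TE. card e = 2 \<and> e \<subseteq> N)
     \<and> (\<forall>a\<in>N. \<forall>b\<in>N. (a, b) \<in> {(x, y). {x, y} \<in> TE}\<^sup>*)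
     \<and> (\<nexists>cs. tcycle TE cs)"

definition comp_del_node :: "'n set \<Rightarrow> 'n set set \<Rightarrow> 'n \<Rightarrow> 'n \<Rightarrow> 'n set" where
  "comp_del_node N TE t h = {x \<in> N - {t}. (h, x) \<in> {(a, b). {a, b} \<in> TE \<and> t \<notin> {a, b}}\<^sup>*}"

definition comps_node :: "'n set \<Rightarrow> 'n set set \<Rightarrow> 'n \<Rightarrow> 'n set set" where
  "comps_node N TE t = comp_del_node N TE t ` (N - {t})"

definition comp_del_edge :: "'n set \<Rightarrow> 'n set set \<Rightarrow> 'n set \<Rightarrow> 'n \<Rightarrow> 'n set" where
  "comp_del_edge N TE e a = {x \<in> N. (a, x) \<in> {(u, w). {u, w} \<in> TE - {e}}\<^sup>*}"

definition bag_union :: "('n \<Rightarrow> 'v set) \<Rightarrow> 'n set \<Rightarrow> 'v set" where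
  "bag_union B S = (\<Union>h\<in>S. B h)"

definition cross_size :: "'v set multiset \<Rightarrow> 'n set \<Rightarrow> 'n set set \<Rightarrow> ('n \<Rightarrow> 'v set) \<Rightarrow> 'n \<Rightarrow> 'n \<Rightarrow> nat" where
  "cross_size E N TE B a b =
     cut_edges E (bag_union B (comp_del_edge N TE {a, b} a)) (bag_union B (comp_del_edge N TE {a, b} b))"

definition tree_partition :: "'v set \<Rightarrow> 'v set multiset \<Rightarrow> 'n set \<Rightarrow> 'n set set \<Rightarrow> ('n \<Rightarrow> 'v set) \<Rightarrow> bool" where
  "tree_partition V E N TE B \<longleftrightarrow> stree N TE
     \<and> (\<forall>s\<in>N. \<forall>t\<in>N. s \<noteq> t \<longrightarrow> B s \<inter> B t = {})
     \<and> (\<Union>t\<in>N. B t) = V"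

text \<open>Vertices of the torso Z_t: the vertices of B_t (Inl) and one satellite per component
of T - t (Inr C, C the node set of the component).\<close>
definition torso_map :: "'n set \<Rightarrow> 'n set set \<Rightarrow> ('n \<Rightarrow> 'v set) \<Rightarrow> 'n \<Rightarrow> 'v \<Rightarrow> 'v + 'n set" where
  "torso_map N TE B t v = (if v \<in> B t then Inl v
     else Inr (THE C. C \<in> comps_node N TE t \<and> (\<exists>h\<in>C. v \<in> B h)))"

definition torso_V :: "'n set \<Rightarrow> 'n set set \<Rightarrow> ('n \<Rightarrow> 'v set) \<Rightarrow> 'n \<Rightarrow> ('v + 'n set) set" where
  "torso_V N TE B t = Inl ` B t \<union> Inr ` comps_node N TE t"

text \<open>Edges: images of edges of G under the identification; loops (edges whose image
is a singleton) are deleted, parallel edges kept.\<close>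
definition torso_E :: "'v set multiset \<Rightarrow> 'n set \<Rightarrow> 'n set set \<Rightarrow> ('n \<Rightarrow> 'v set) \<Rightarrow> 'n \<Rightarrow> ('v + 'n set) set multiset" where
  "torso_E E N TE B t = filter_mset (\<lambda>e. card e = 2) (image_mset (\<lambda>e. torso_map N TE B t ` e) E)"

definition k_tight :: "nat \<Rightarrow> 'v set \<Rightarrow> 'v set multiset \<Rightarrow> 'n set \<Rightarrow> 'n set set \<Rightarrow> ('n \<Rightarrow> 'v set) \<Rightarrow> bool" where
  "k_tight k V E N TE B \<longleftrightarrow> tree_partition V E N TE B
     \<and> (\<forall>a b. {a, b} \<in> TE \<longrightarrow> cross_size E N TE B a b \<le> k)
     \<and> (\<forall>t\<in>N. max_deg (torso_V N TE B t) (torso_E E N TE B t) \<ge> k + 1)"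

definition k_splittable :: "nat \<Rightarrow> 'v set multiset \<Rightarrow> 'n set \<Rightarrow> 'n set set \<Rightarrow> ('n \<Rightarrow> 'v set) \<Rightarrow> 'n \<Rightarrow> bool" where
  "k_splittable k E N TE B t \<longleftrightarrow>
     (let Z = torso_V N TE B t; EZ = torso_E E N TE B t in
      \<exists>X \<subseteq> Z. cut_edges EZ X (Z - X) \<le> k
          \<and> (\<exists>x\<in>X. deg EZ x \<ge> k + 1) \<and> (\<exists>y\<in>Z - X. deg EZ y \<ge> k + 1))"

definition s_count :: "nat \<Rightarrow> 'v set multiset \<Rightarrow> ('n \<Rightarrow> 'v set) \<Rightarrow> 'n \<Rightarrow> nat" where
  "s_count k E B t = card {v \<in> B t. deg E v \<ge> k + 1}"

definition weight :: "nat \<Rightarrow> 'v set multiset \<Rightarrow> 'n set \<Rightarrow> ('n \<Rightarrow> 'v set) \<Rightarrow> int" where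
  "weight k E N B = (\<Sum>t\<in>N. int (s_count k E B t) - 1)"

end

theory Submission
  imports Defs "HOL-Library.Transitive_Closure_Table"
begin


definition redge :: "'n set set \<Rightarrow> 'n set \<Rightarrow> ('n \<times> 'n) set" where
  "redge TE e = {(u, w). {u, w} \<in> TE - {e}}"

lemma path_edges:
  "rtrancl_path r x xs y \<Longrightarrow> i < length xs \<Longrightarrow> r ((x#xs)!i) ((x#xs)!(i+1))"
proof (induction arbitrary: i rule: rtrancl_path.induct)
  case (base x) then show ?case by simp
next
  case (step x y ys z)
  then show ?case by (cases i) auto
qed

lemma path_last: "rtrancl_path r x xs y \<Longrightarrow> xs \<noteq> [] \<Longrightarrow> last xs = y"
proof (induction rule: rtrancl_path.induct)
  case (base x) then show ?case by simp
next
  case (step x y ys z)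
  then show ?case by (cases ys) (auto elim: rtrancl_path.cases)
qed

lemma bridge:
  assumes "stree N TE" "{a, b} \<in> TE"
  shows "(a, b) \<notin> (redge TE {a, b})\<^sup>*"
proof
  assume "(a, b) \<in> (redge TE {a, b})\<^sup>*"
  then have "(\<lambda>u w. (u, w) \<in> redge TE {a, b})\<^sup>*\<^sup>* a b"
    by (simp add: rtrancl_def)
  then obtain xs where "rtrancl_path (\<lambda>u w. (u, w) \<in> redge TE {a, b}) a xs b"
    using rtranclp_eq_rtrancl_path by metis
  then obtain xs where p: "rtrancl_path (\<lambda>u w. (u, w) \<in> redge TE {a, b}) a xs b"
    and d: "distinct (a # xs)" by (rule rtrancl_path_distinct)
  have ab: "a \<noteq> b" using assms unfolding stree_def by fastforce
  have ne: "xs \<noteq> []" using p ab by (auto elim: rtrancl_path.cases)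
  have "xs \<noteq> [b]"
  proof
    assume "xs = [b]"
    with p have "(a, b) \<in> redge TE {a, b}" by (auto elim!: rtrancl_path.cases)
    then show False by (simp add: redge_def)
  qed
  then have len: "length xs \<ge> 2" using ne path_last[OF p ne]
    by (cases xs; cases "tl xs"; auto)
  have "tcycle TE (a # xs)"
    unfolding tcycle_def
  proof (intro conjI allI impI)
    show "3 \<le> length (a # xs)" using len by simp
    show "distinct (a # xs)" by fact
    fix i assume "i < length (a # xs) - 1"
    then have "(\<lambda>u w. (u, w) \<in> redge TE {a, b}) ((a#xs)!i) ((a#xs)!(i+1))"
      using path_edges[OF p] by simp
    then show "{(a # xs) ! i, (a # xs) ! (i + 1)} \<in> TE" by (simp add: redge_def)
  next
    have "last (a # xs) = b" using path_last[OF p ne] ne by simp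
    then show "{last (a # xs), hd (a # xs)} \<in> TE" using assms(2) by (simp add: insert_commute)
  qed
  then show False using assms(1) unfolding stree_def by blast
qed

lemma nocycle_from_bridges:
  assumes br: "\<And>a b. {a, b} \<in> TE \<Longrightarrow> (a, b) \<notin> (redge TE {a, b})\<^sup>*"
  shows "\<not> tcycle TE cs"
proof
  assume c: "tcycle TE cs"
  define n where "n = length cs"
  have n3: "n \<ge> 3" and dist: "distinct cs"
    and ed: "\<And>i. i < n - 1 \<Longrightarrow> {cs ! i, cs ! (i+1)} \<in> TE"
    and cl: "{last cs, hd cs} \<in> TE"
    using c unfolding tcycle_def n_def by auto
  have cne: "cs \<noteq> []" using n3 unfolding n_def by auto
  have lst: "last cs = cs ! (n - 1)" and hd: "hd cs = cs ! 0" using cne unfolding n_def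
    by (auto simp: last_conv_nth hd_conv_nth)
  let ?R = "redge TE {hd cs, last cs}"
  have "i \<le> n - 1 \<Longrightarrow> (hd cs, cs ! i) \<in> ?R\<^sup>*" for i
  proof (induction i)
    case 0 then show ?case by (simp add: hd)
  next
    case (Suc i)
    then have "i < n - 1" by simp
    have e: "{cs ! i, cs ! (i+1)} \<in> TE" by (rule ed) fact
    have "{cs ! i, cs ! (i+1)} \<noteq> {hd cs, last cs}"
    proof
      assume eq: "{cs ! i, cs ! (i+1)} = {hd cs, last cs}"
      have i1: "i < n" "i + 1 < n" "0 < n" "n - 1 < n" using \<open>i < n - 1\<close> n3 by auto
      have inj: "\<And>p q. p < n \<Longrightarrow> q < n \<Longrightarrow> cs ! p = cs ! q \<Longrightarrow> p = q"
        using dist n_def nth_eq_iff_index_eq by blast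
      from eq have "cs ! i = cs ! 0 \<or> cs ! i = cs ! (n - 1)" by (auto simp: hd lst doubleton_eq_iff)
      moreover from eq have "cs ! (i+1) = cs ! 0 \<or> cs ! (i+1) = cs ! (n - 1)" by (auto simp: hd lst doubleton_eq_iff)
      ultimately have "i = 0 \<or> i = n - 1" "i + 1 = 0 \<or> i + 1 = n - 1" using inj i1 by metis+
      then show False using \<open>i < n - 1\<close> n3 by auto
    qed
    then have "(cs ! i, cs ! Suc i) \<in> ?R" using e by (simp add: redge_def)
    with Suc show ?case by (meson Suc_leD rtrancl.rtrancl_into_rtrancl)
  qed
  then have "(hd cs, last cs) \<in> ?R\<^sup>*" by (simp add: lst)
  moreover have "{hd cs, last cs} \<in> TE" using cl by (simp add: insert_commute)
  ultimately show False using br by blast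
qed




lemma size_filter_mono:
  assumes "\<And>x. x \<in># M \<Longrightarrow> P x \<Longrightarrow> Q x"
  shows "size (filter_mset P M) \<le> size (filter_mset Q M)"
  by (rule size_mset_mono, rule filter_mset_mono_strong) (use assms in auto)

lemma sym_redge: "sym (redge TE e)"
  unfolding redge_def sym_def by (auto simp: insert_commute)

lemma redge_sym_rt: "(x, y) \<in> (redge TE e)\<^sup>* \<Longrightarrow> (y, x) \<in> (redge TE e)\<^sup>*"
  using sym_rtrancl[OF sym_redge] by (meson symD)

definition rnode :: "'n set set \<Rightarrow> 'n \<Rightarrow> ('n \<times> 'n) set" where
  "rnode TE t = {(a, b). {a, b} \<in> TE \<and> t \<notin> {a, b}}"

lemma rnode_sym_rt: "(x, y) \<in> (rnode TE t)\<^sup>* \<Longrightarrow> (y, x) \<in> (rnode TE t)\<^sup>*"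
proof -
  have "sym (rnode TE t)" unfolding rnode_def sym_def by (auto simp: insert_commute)
  then show "(x, y) \<in> (rnode TE t)\<^sup>* \<Longrightarrow> (y, x) \<in> (rnode TE t)\<^sup>*"
    using sym_rtrancl by (meson symD)
qed

lemma cde_def2: "comp_del_edge N TE e a = {x \<in> N. (a, x) \<in> (redge TE e)\<^sup>*}"
  unfolding comp_del_edge_def redge_def by simp

lemma cdn_def2: "comp_del_node N TE t h = {x \<in> N - {t}. (h, x) \<in> (rnode TE t)\<^sup>*}"
  unfolding comp_del_node_def rnode_def by simp

lemma stree_conn: "stree N TE \<Longrightarrow> a \<in> N \<Longrightarrow> b \<in> N \<Longrightarrow> (a, b) \<in> {(x, y). {x, y} \<in> TE}\<^sup>*"
proof -
  assume a: "stree N TE" "a \<in> N" "b \<in> N"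
  then have "\<forall>a\<in>N. \<forall>b\<in>N. (a, b) \<in> {(x, y). {x, y} \<in> TE}\<^sup>*" unfolding stree_def by (elim conjE)
  then show ?thesis using a by blast
qed

lemma stree_edge: "stree N TE \<Longrightarrow> {a, b} \<in> TE \<Longrightarrow> a \<in> N \<and> b \<in> N \<and> a \<noteq> b"
proof -
  assume "stree N TE" "{a, b} \<in> TE"
  then have "card {a, b} = 2" "{a, b} \<subseteq> N" unfolding stree_def by auto
  then show ?thesis by (cases "a = b") auto
qed

lemma sides_cover:
  assumes T: "stree N TE" and e: "{a, b} \<in> TE" and x: "x \<in> N"
  shows "x \<in> comp_del_edge N TE {a, b} a \<union> comp_del_edge N TE {a, b} b"
proof -
  have aN: "a \<in> N" using stree_edge[OF T e] by simp
  have "(a, x) \<in> {(x, y). {x, y} \<in> TE}\<^sup>*" using stree_conn[OF T aN x] .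
  then have "(a, x) \<in> (redge TE {a,b})\<^sup>* \<or> (b, x) \<in> (redge TE {a,b})\<^sup>*"
  proof (induction rule: rtrancl_induct)
    case base then show ?case by simp
  next
    case (step y z)
    show ?case
    proof (cases "{y, z} = {a, b}")
      case True
      then show ?thesis by (auto simp: doubleton_eq_iff)
    next
      case False
      then have "(y, z) \<in> redge TE {a, b}" using step.hyps(2) by (simp add: redge_def)
      then show ?thesis using step.IH by (meson rtrancl.rtrancl_into_rtrancl)
    qed
  qed
  then show ?thesis using x by (auto simp: cde_def2)
qed

lemma sides_disj:
  assumes T: "stree N TE" and e: "{a, b} \<in> TE"
  shows "comp_del_edge N TE {a, b} a \<inter> comp_del_edge N TE {a, b} b = {}"
proof (rule ccontr)
  assume "\<not> ?thesis"
  then obtain x where "(a, x) \<in> (redge TE {a,b})\<^sup>*" "(b, x) \<in> (redge TE {a,b})\<^sup>*"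
    by (auto simp: cde_def2)
  then have "(a, b) \<in> (redge TE {a,b})\<^sup>*" by (meson redge_sym_rt rtrancl_trans)
  then show False using bridge[OF T e] by simp
qed

lemma side_self: "a \<in> N \<Longrightarrow> a \<in> comp_del_edge N TE e a"
  by (simp add: cde_def2)

lemma side_other:
  assumes T: "stree N TE" and e: "{a, b} \<in> TE"
  shows "comp_del_edge N TE {a, b} b = N - comp_del_edge N TE {a, b} a"
  using sides_cover[OF T e] sides_disj[OF T e]
  by (auto simp: cde_def2)

lemma cdn_self: "x \<in> N - {t} \<Longrightarrow> x \<in> comp_del_node N TE t x"
  by (simp add: cdn_def2)

lemma cdn_eq:
  assumes "y \<in> comp_del_node N TE t x"
  shows "comp_del_node N TE t y = comp_del_node N TE t x"
proof -
  have "(x, y) \<in> (rnode TE t)\<^sup>*" using assms by (simp add: cdn_def2)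
  then have "(y, x) \<in> (rnode TE t)\<^sup>*" by (rule rnode_sym_rt)
  show ?thesis unfolding cdn_def2
  proof (intro Collect_cong conj_cong refl iffI)
    fix z assume "(y, z) \<in> (rnode TE t)\<^sup>*"
    then show "(x, z) \<in> (rnode TE t)\<^sup>*" using \<open>(x, y) \<in> _\<close> by (rule rtrancl_trans[rotated])
  next
    fix z assume "(x, z) \<in> (rnode TE t)\<^sup>*"
    then show "(y, z) \<in> (rnode TE t)\<^sup>*" using \<open>(y, x) \<in> _\<close> by (rule rtrancl_trans[rotated])
  qed
qed

lemma cdn_edge:
  assumes "{x, y} \<in> TE" "t \<notin> {x, y}" "y \<in> N"
  shows "comp_del_node N TE t y = comp_del_node N TE t x"
proof -
  have "(x, y) \<in> rnode TE t" using assms by (simp add: rnode_def)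
  then have "y \<in> comp_del_node N TE t x" using assms by (auto simp: cdn_def2)
  then show ?thesis by (rule cdn_eq)
qed

lemma cdn_disj_eq:
  assumes "z \<in> comp_del_node N TE t x" "z \<in> comp_del_node N TE t y"
  shows "comp_del_node N TE t x = comp_del_node N TE t y"
  using cdn_eq[OF assms(1)] cdn_eq[OF assms(2)] by simp

lemma cdn_sub: "comp_del_node N TE t x \<subseteq> N - {t}"
  by (auto simp: cdn_def2)

lemma cdn_nb:
  assumes T: "stree N TE" and t: "t \<in> N" and g: "g \<in> N - {t}"
  shows "\<exists>h. {t, h} \<in> TE \<and> comp_del_node N TE t g = comp_del_node N TE t h"
proof -
  have "(t, g) \<in> {(x, y). {x, y} \<in> TE}\<^sup>*" using stree_conn[OF T t] g by simp
  then have "g = t \<or> (\<exists>h. {t, h} \<in> TE \<and> (h, g) \<in> (rnode TE t)\<^sup>*)"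
  proof (induction rule: rtrancl_induct)
    case base then show ?case by simp
  next
    case (step y z)
    show ?case
    proof (cases "z = t")
      case True then show ?thesis by simp
    next
      case zt: False
      show ?thesis
      proof (cases "y = t")
        case True
        then have "{t, z} \<in> TE" using step.hyps(2) by simp
        then show ?thesis by blast
      next
        case False
        then obtain h where h: "{t, h} \<in> TE" "(h, y) \<in> (rnode TE t)\<^sup>*" using step.IH False by blast
        have "(y, z) \<in> rnode TE t" using step.hyps(2) False zt by (simp add: rnode_def)
        then have "(h, z) \<in> (rnode TE t)\<^sup>*" using h(2) by (rule rtrancl.rtrancl_into_rtrancl[rotated])
        then show ?thesis using h(1) by blast
      qed
    qed
  qed
  then obtain h where h: "{t, h} \<in> TE" "(h, g) \<in> (rnode TE t)\<^sup>*" using g by auto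
  then have "g \<in> comp_del_node N TE t h" using g by (simp add: cdn_def2)
  then have "comp_del_node N TE t g = comp_del_node N TE t h" by (rule cdn_eq)
  then show ?thesis using h(1) by blast
qed

lemma cdn_side:
  assumes T: "stree N TE" and e: "{t, h} \<in> TE"
  shows "comp_del_node N TE t h = comp_del_edge N TE {t, h} h"
proof
  show "comp_del_node N TE t h \<subseteq> comp_del_edge N TE {t, h} h"
  proof
    fix x assume "x \<in> comp_del_node N TE t h"
    then have x: "x \<in> N" "(h, x) \<in> (rnode TE t)\<^sup>*" by (auto simp: cdn_def2)
    have "rnode TE t \<subseteq> redge TE {t, h}" by (auto simp: rnode_def redge_def)
    then have "(h, x) \<in> (redge TE {t, h})\<^sup>*" using x(2) rtrancl_mono by blast
    then show "x \<in> comp_del_edge N TE {t, h} h" using x by (simp add: cde_def2)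
  qed
next
  have nt: "(h, t) \<notin> (redge TE {t, h})\<^sup>*"
  proof
    assume "(h, t) \<in> (redge TE {t, h})\<^sup>*"
    then have "(t, h) \<in> (redge TE {t, h})\<^sup>*" by (rule redge_sym_rt)
    then show False using bridge[OF T e] by simp
  qed
  have hN: "h \<in> N" "h \<noteq> t" using stree_edge[OF T e] by auto
  show "comp_del_edge N TE {t, h} h \<subseteq> comp_del_node N TE t h"
  proof
    fix x assume "x \<in> comp_del_edge N TE {t, h} h"
    then have x: "x \<in> N" "(h, x) \<in> (redge TE {t, h})\<^sup>*" by (auto simp: cde_def2)
    from x(2) have "(h, x) \<in> (rnode TE t)\<^sup>* \<and> x \<noteq> t"
    proof (induction rule: rtrancl_induct)
      case base then show ?case using hN by simp
    next
      case (step y z)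
      have "(h, z) \<in> (redge TE {t, h})\<^sup>*" using step.hyps by (rule rtrancl.rtrancl_into_rtrancl)
      then have "z \<noteq> t" using nt by blast
      moreover have "y \<noteq> t" using step.IH by simp
      ultimately have "(y, z) \<in> rnode TE t" using step.hyps(2) by (simp add: rnode_def redge_def)
      then show ?case using step \<open>z \<noteq> t\<close> by (meson rtrancl.rtrancl_into_rtrancl)
    qed
    then show "x \<in> comp_del_node N TE t h" using x by (simp add: cdn_def2)
  qed
qed




lemma tp_stree: "tree_partition V E N TE B \<Longrightarrow> stree N TE"
  by (simp add: tree_partition_def)
lemma tp_disj: "tree_partition V E N TE B \<Longrightarrow> s \<in> N \<Longrightarrow> u \<in> N \<Longrightarrow> x \<in> B s \<Longrightarrow> x \<in> B u \<Longrightarrow> s = u"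
  unfolding tree_partition_def by blast
lemma tp_union: "tree_partition V E N TE B \<Longrightarrow> (\<Union>t\<in>N. B t) = V"
  by (simp add: tree_partition_def)
lemma tp_bag_sub: "tree_partition V E N TE B \<Longrightarrow> u \<in> N \<Longrightarrow> B u \<subseteq> V"
  using tp_union by blast
lemma tp_cover: "tree_partition V E N TE B \<Longrightarrow> x \<in> V \<Longrightarrow> \<exists>u\<in>N. x \<in> B u"
  using tp_union by blast

lemma M_inl: "v \<in> B t \<Longrightarrow> torso_map N TE B t v = Inl v"
  by (simp add: torso_map_def)

lemma M_inl_iff: "torso_map N TE B t x = Inl v \<longleftrightarrow> x \<in> B t \<and> x = v"
  by (simp add: torso_map_def)

lemma M_inr:
  assumes tp: "tree_partition V E N TE B" and u: "u \<in> N" "u \<noteq> t" and t: "t \<in> N" and v: "v \<in> B u"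
  shows "torso_map N TE B t v = Inr (comp_del_node N TE t u)"
proof -
  have vt: "v \<notin> B t"
  proof
    assume "v \<in> B t"
    from tp_disj[OF tp t u(1) this v] u(2) show False by simp
  qed
  have "(THE C. C \<in> comps_node N TE t \<and> (\<exists>h\<in>C. v \<in> B h)) = comp_del_node N TE t u"
  proof (rule the_equality)
    show "comp_del_node N TE t u \<in> comps_node N TE t \<and> (\<exists>h\<in>comp_del_node N TE t u. v \<in> B h)"
    proof
      have "u \<in> N - {t}" using u by simp
      then show "comp_del_node N TE t u \<in> comps_node N TE t" unfolding comps_node_def by (rule imageI)
      have "u \<in> comp_del_node N TE t u" using u by (intro cdn_self) simp
      then show "\<exists>h\<in>comp_del_node N TE t u. v \<in> B h" using v by (rule bexI[rotated])
    qed
  next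
    fix C assume C: "C \<in> comps_node N TE t \<and> (\<exists>h\<in>C. v \<in> B h)"
    then have "C \<in> comp_del_node N TE t ` (N - {t})" unfolding comps_node_def by simp
    then obtain g where g: "g \<in> N - {t}" "C = comp_del_node N TE t g" by (rule imageE) simp
    obtain h where h: "h \<in> C" "v \<in> B h" using C by (elim conjE bexE)
    have "h \<in> N - {t}" using h(1) g(2) cdn_sub by (metis subsetD)
    then have hN: "h \<in> N" by simp
    have "h = u" using tp_disj[OF tp hN u(1) h(2) v] .
    then have "u \<in> comp_del_node N TE t g" using h g by simp
    then have "comp_del_node N TE t u = comp_del_node N TE t g" by (rule cdn_eq)
    then show "C = comp_del_node N TE t u" using g(2) by simp
  qed
  then show ?thesis using vt unfolding torso_map_def by simp
qed

lemma deg_torso_E: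
  "deg (torso_E E N TE B t) x = size (filter_mset (\<lambda>e. card (torso_map N TE B t ` e) = 2 \<and> x \<in> torso_map N TE B t ` e) E)"
  unfolding deg_def torso_E_def by (simp add: filter_filter_mset filter_mset_image_mset)

lemma mgraph_edge: "mgraph V E \<Longrightarrow> e \<in># E \<Longrightarrow> \<exists>a b. e = {a, b} \<and> a \<noteq> b \<and> a \<in> V \<and> b \<in> V"
  unfolding mgraph_def by (metis card_2_iff insert_subset)

lemma deg_inl:
  assumes g: "mgraph V E" and v: "v \<in> B t"
  shows "deg (torso_E E N TE B t) (Inl v) = deg E v"
proof -
  let ?M = "torso_map N TE B t"
  have Mv: "?M v = Inl v" using v by (rule M_inl)
  have Mx: "?M x = Inl v \<Longrightarrow> x = v" for x using M_inl_iff[of N TE B t x v] by simp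
  have "filter_mset (\<lambda>e. card (?M ` e) = 2 \<and> Inl v \<in> ?M ` e) E = filter_mset (\<lambda>e. v \<in> e) E"
  proof (rule filter_mset_cong0)
    fix e assume "e \<in># E"
    then obtain a b where e: "e = {a, b}" "a \<noteq> b" using mgraph_edge[OF g] by blast
    have iff: "Inl v \<in> ?M ` e \<longleftrightarrow> v \<in> e"
    proof
      assume "Inl v \<in> ?M ` e"
      then obtain x where "x \<in> e" "Inl v = ?M x" by (rule imageE)
      then show "v \<in> e" using Mx by metis
    next
      assume "v \<in> e"
      then show "Inl v \<in> ?M ` e" using Mv by (metis imageI)
    qed
    show "(card (?M ` e) = 2 \<and> Inl v \<in> ?M ` e) = (v \<in> e)"
    proof
      assume ve: "v \<in> e"
      have "?M a \<noteq> ?M b"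
      proof
        assume eq: "?M a = ?M b"
        have "a = v \<or> b = v" using ve e(1) by blast
        then show False
        proof (elim disjE)
          assume "a = v" then have "?M b = Inl v" using eq Mv by simp
          then have "b = v" by (rule Mx)
          then show False using \<open>a = v\<close> e(2) by simp
        next
          assume "b = v" then have "?M a = Inl v" using eq Mv by simp
          then have "a = v" by (rule Mx)
          then show False using \<open>b = v\<close> e(2) by simp
        qed
      qed
      then have "card (?M ` e) = 2" using e(1) by simp
      then show "card (?M ` e) = 2 \<and> Inl v \<in> ?M ` e" using iff ve by simp
    next
      assume "card (?M ` e) = 2 \<and> Inl v \<in> ?M ` e"
      then show "v \<in> e" using iff by simp
    qed
  qed
  then show ?thesis unfolding deg_torso_E by (simp add: deg_def)
qed

definition bu_side where "bu_side E N TE B a b = bag_union B (comp_del_edge N TE {a, b} a)"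

lemma deg_inr:
  assumes g: "mgraph V E" and tp: "tree_partition V E N TE B" and t: "t \<in> N"
    and adh: "\<forall>a b. {a, b} \<in> TE \<longrightarrow> cross_size E N TE B a b \<le> k"
    and C: "C \<in> comps_node N TE t"
  shows "deg (torso_E E N TE B t) (Inr C) \<le> k"
proof -
  let ?M = "torso_map N TE B t"
  have T: "stree N TE" using tp by (rule tp_stree)
  have "C \<in> comp_del_node N TE t ` (N - {t})" using C unfolding comps_node_def by simp
  then obtain g0 where g0: "g0 \<in> N - {t}" "C = comp_del_node N TE t g0" by (rule imageE) simp
  obtain h where h0: "{t, h} \<in> TE" "comp_del_node N TE t g0 = comp_del_node N TE t h"
    using cdn_nb[OF T t g0(1)] by (elim exE conjE)
  have h: "{t, h} \<in> TE" "C = comp_del_node N TE t h" using h0 g0(2) by simp_all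
  define Sh where "Sh = comp_del_edge N TE {t, h} h"
  define St where "St = comp_del_edge N TE {t, h} t"
  have CSh: "C = Sh" unfolding Sh_def h(2) by (rule cdn_side[OF T h(1)])
  have ShSt: "Sh = N - St" unfolding Sh_def St_def by (rule side_other[OF T h(1)])
  have tSt: "t \<in> St" unfolding St_def using t by (rule side_self)
  have in_h: "x \<in> bag_union B Sh" if xV: "x \<in> V" and Mx: "?M x = Inr C" for x
  proof -
    obtain u where u: "u \<in> N" "x \<in> B u" using tp_cover[OF tp xV] by blast
    have "u \<noteq> t"
    proof
      assume "u = t"
      then have "?M x = Inl x" using u(2) by (simp add: M_inl)
      then show False using Mx by simp
    qed
    then have "?M x = Inr (comp_del_node N TE t u)" using M_inr[OF tp u(1) _ t u(2)] by simp
    then have "comp_del_node N TE t u = C" using Mx by simp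
    moreover have "u \<in> comp_del_node N TE t u" using u(1) \<open>u \<noteq> t\<close> by (intro cdn_self) simp
    ultimately have "u \<in> Sh" using CSh by simp
    then show ?thesis using u(2) unfolding bag_union_def by (rule UN_I)
  qed
  have in_t: "x \<in> bag_union B St" if xV: "x \<in> V" and Mx: "?M x \<noteq> Inr C" for x
  proof -
    obtain u where u: "u \<in> N" "x \<in> B u" using tp_cover[OF tp xV] by blast
    show ?thesis
    proof (cases "u = t")
      case True then have "u \<in> St" using tSt by simp
      then show ?thesis using u(2) unfolding bag_union_def by (rule UN_I)
    next
      case False
      then have "?M x = Inr (comp_del_node N TE t u)" using M_inr[OF tp u(1) _ t u(2)] by simp
      then have ne: "comp_del_node N TE t u \<noteq> C" using Mx by simp
      have "u \<notin> C"
      proof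
        assume "u \<in> C"
        then have "comp_del_node N TE t u = C" unfolding h(2) by (rule cdn_eq)
        then show False using ne by simp
      qed
      then have "u \<in> St" using CSh ShSt u(1) by simp
      then show ?thesis using u(2) unfolding bag_union_def by (rule UN_I)
    qed
  qed
  have "deg (torso_E E N TE B t) (Inr C) \<le> cut_edges E (bag_union B St) (bag_union B Sh)"
    unfolding deg_torso_E cut_edges_def
  proof (rule size_filter_mono)
    fix e assume e: "e \<in># E" and P: "card (?M ` e) = 2 \<and> Inr C \<in> ?M ` e"
    obtain a b where ab: "e = {a, b}" "a \<noteq> b" "a \<in> V" "b \<in> V" using mgraph_edge[OF g e] by blast
    have d: "?M a \<noteq> ?M b"
    proof
      assume "?M a = ?M b"
      then have "?M ` e = {?M a}" using ab(1) by simp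
      then have "card (?M ` e) = 1" by (simp only: is_singleton_altdef[symmetric] is_singleton_def) blast
      then show False using P by simp
    qed
    have "Inr C \<in> ?M ` e" using P by (rule conjunct2)
    then have "Inr C \<in> {?M a, ?M b}" using ab(1) by (simp only: image_insert image_empty)
    then have "Inr C = ?M a \<or> Inr C = ?M b" by (simp only: insert_iff empty_iff simp_thms)
    then have "?M a = Inr C \<or> ?M b = Inr C" by (elim disjE) (rule disjI1, rule sym, assumption, rule disjI2, rule sym, assumption)
    then show "e \<inter> bag_union B St \<noteq> {} \<and> e \<inter> bag_union B Sh \<noteq> {}"
    proof (elim disjE)
      assume a: "?M a = Inr C"
      then have b: "?M b \<noteq> Inr C" using d by simp
      have "a \<in> bag_union B Sh" using in_h[OF ab(3) a] .
      moreover have "b \<in> bag_union B St" using in_t[OF ab(4) b] .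
      ultimately show ?thesis using ab(1) by blast
    next
      assume b: "?M b = Inr C"
      then have a: "?M a \<noteq> Inr C" using d by simp
      have "b \<in> bag_union B Sh" using in_h[OF ab(4) b] .
      moreover have "a \<in> bag_union B St" using in_t[OF ab(3) a] .
      ultimately show ?thesis using ab(1) by blast
    qed
  qed
  also have "\<dots> = cross_size E N TE B t h" by (simp add: cross_size_def St_def Sh_def)
  also have "\<dots> \<le> k" using adh h(1) by simp
  finally show ?thesis .
qed

lemma finite_torso_V:
  assumes tp: "tree_partition V E N TE B" and g: "mgraph V E" and u: "u \<in> N"
  shows "finite (torso_V N TE B u)"
proof -
  have "finite V" using g by (simp add: mgraph_def)
  then have "finite (B u)" using tp_bag_sub[OF tp u] finite_subset by blast
  moreover have "finite N" using tp_stree[OF tp] by (simp add: stree_def)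
  ultimately show ?thesis unfolding torso_V_def comps_node_def by simp
qed

lemma strength_witness:
  assumes g: "mgraph V E" and kt: "k_tight k V E N TE B" and u: "u \<in> N"
  shows "\<exists>v\<in>B u. deg E v \<ge> k + 1"
proof -
  have tp: "tree_partition V E N TE B" and adh: "\<forall>a b. {a, b} \<in> TE \<longrightarrow> cross_size E N TE B a b \<le> k"
    and st: "max_deg (torso_V N TE B u) (torso_E E N TE B u) \<ge> k + 1"
    using kt u unfolding k_tight_def by auto
  let ?S = "insert 0 (deg (torso_E E N TE B u) ` torso_V N TE B u)"
  have fin: "finite ?S" using finite_torso_V[OF tp g u] by simp
  have "Max ?S \<in> ?S" using fin by (rule Max_in) simp
  moreover have "Max ?S \<noteq> 0" using st unfolding max_deg_def by simp
  ultimately obtain z where z: "z \<in> torso_V N TE B u" "deg (torso_E E N TE B u) z \<ge> k + 1"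
    using st unfolding max_deg_def by auto
  show ?thesis
  proof (cases z)
    case (Inl v)
    then have "v \<in> B u" using z(1) unfolding torso_V_def by auto
    then show ?thesis using z(2) deg_inl[where N=N and TE=TE and B=B and t=u, OF g \<open>v \<in> B u\<close>] Inl by auto
  next
    case (Inr C)
    then have "C \<in> comps_node N TE u" using z(1) unfolding torso_V_def by auto
    then have "deg (torso_E E N TE B u) z \<le> k" using deg_inr[OF g tp u adh] Inr by simp
    then show ?thesis using z(2) by simp
  qed
qed

lemma ktight_intro:
  assumes g: "mgraph V E" and tp: "tree_partition V E N TE B"
    and adh: "\<forall>a b. {a, b} \<in> TE \<longrightarrow> cross_size E N TE B a b \<le> k"
    and w: "\<forall>u\<in>N. \<exists>v\<in>B u. deg E v \<ge> k + 1"
  shows "k_tight k V E N TE B"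
  unfolding k_tight_def
proof (intro conjI ballI tp adh)
  fix u assume u: "u \<in> N"
  obtain v where v: "v \<in> B u" "deg E v \<ge> k + 1" using w u by blast
  have "deg (torso_E E N TE B u) (Inl v) \<le> max_deg (torso_V N TE B u) (torso_E E N TE B u)"
    unfolding max_deg_def using finite_torso_V[OF tp g u] v(1)
    by (intro Max_ge) (auto simp: torso_V_def)
  then show "k + 1 \<le> max_deg (torso_V N TE B u) (torso_E E N TE B u)"
    using deg_inl[where N=N and TE=TE and B=B and t=u, OF g v(1)] v(2) by simp
qed




locale split =
  fixes V :: "'v set" and E :: "'v set multiset" and k :: nat
    and N :: "'n set" and TE :: "'n set set" and B :: "'n \<Rightarrow> 'v set"
    and t :: 'n and X :: "('v + 'n set) set"
    and \<psi> :: "'n \<Rightarrow> 'm" and s :: 'm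
  assumes g: "mgraph V E"
    and tp: "tree_partition V E N TE B"
    and adh: "\<forall>a b. {a, b} \<in> TE \<longrightarrow> cross_size E N TE B a b \<le> k"
    and wit: "\<forall>u\<in>N. \<exists>v\<in>B u. deg E v \<ge> k + 1"
    and tN: "t \<in> N"
    and XZ: "X \<subseteq> torso_V N TE B t"
    and cutX: "cut_edges (torso_E E N TE B t) X (torso_V N TE B t - X) \<le> k"
    and v1: "\<exists>v\<in>B t. Inl v \<in> X \<and> deg E v \<ge> k + 1"
    and v2: "\<exists>v\<in>B t. Inl v \<notin> X \<and> deg E v \<ge> k + 1"
    and inj: "inj_on \<psi> N"
    and sfresh: "s \<notin> \<psi> ` N"
begin

definition cmp where "cmp u = comp_del_node N TE t u"
definition L where "L = {u \<in> N - {t}. Inr (cmp u) \<in> X}"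
definition N' where "N' = insert s (\<psi> ` N)"
definition \<phi> where "\<phi> y = (if y = s then t else inv_into N \<psi> y)"
definition TE' where "TE' = (\<lambda>e. \<psi> ` e) ` {e \<in> TE. t \<notin> e}
   \<union> (\<lambda>h. {\<psi> t, \<psi> h}) ` {h. {t, h} \<in> TE \<and> h \<in> L}
   \<union> (\<lambda>h. {s, \<psi> h}) ` {h. {t, h} \<in> TE \<and> h \<notin> L}
   \<union> {{\<psi> t, s}}"
definition B1 where "B1 = {v \<in> B t. Inl v \<in> X}"
definition B2 where "B2 = B t - B1"
definition B' where "B' y = (if y = s then B2 else if y = \<psi> t then B1 else B (\<phi> y))"

lemma T: "stree N TE" using tp by (rule tp_stree)
lemma finN: "finite N" using T by (simp add: stree_def)

lemma phi_psi: "x \<in> N \<Longrightarrow> \<phi> (\<psi> x) = x"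
proof -
  assume x: "x \<in> N"
  then have "\<psi> x \<noteq> s" using sfresh by blast
  then show ?thesis using x inj by (simp add: \<phi>_def)
qed

lemma phi_s: "\<phi> s = t" by (simp add: \<phi>_def)

lemma psi_ne_s: "x \<in> N \<Longrightarrow> \<psi> x \<noteq> s" using sfresh by blast

lemma psi_eq: "x \<in> N \<Longrightarrow> y \<in> N \<Longrightarrow> \<psi> x = \<psi> y \<longleftrightarrow> x = y"
  using inj by (meson inj_onD)

lemma phi_N: "y \<in> N' \<Longrightarrow> \<phi> y \<in> N"
  unfolding N'_def using phi_psi phi_s tN by auto

lemma edge_cases:
  assumes "f \<in> TE'"
  obtains (i) p q where "f = {\<psi> p, \<psi> q}" "{p, q} \<in> TE" "t \<noteq> p" "t \<noteq> q"
    | (ii) h where "f = {\<psi> t, \<psi> h}" "{t, h} \<in> TE" "h \<in> L"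
    | (iii) h where "f = {s, \<psi> h}" "{t, h} \<in> TE" "h \<notin> L"
    | (iv) "f = {\<psi> t, s}"
proof -
  have "(\<exists>e\<in>TE. t \<notin> e \<and> f = \<psi> ` e) \<or> (\<exists>h. {t, h} \<in> TE \<and> h \<in> L \<and> f = {\<psi> t, \<psi> h})
     \<or> (\<exists>h. {t, h} \<in> TE \<and> h \<notin> L \<and> f = {s, \<psi> h}) \<or> f = {\<psi> t, s}"
    using assms unfolding TE'_def by blast
  then show ?thesis
  proof (elim disjE exE bexE conjE)
    fix e assume e: "e \<in> TE" "t \<notin> e" "f = \<psi> ` e"
    have "card e = 2" using T e(1) by (simp add: stree_def)
    then obtain p q where "e = {p, q}" by (meson card_2_iff)
    then show ?thesis using e i by simp
  qed (use ii iii iv in blast)+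
qed

lemma edge_N: "{p, q} \<in> TE \<Longrightarrow> p \<in> N \<and> q \<in> N \<and> p \<noteq> q"
  using stree_edge[OF T] .

lemma TE'_edge: assumes "f \<in> TE'" shows "card f = 2 \<and> f \<subseteq> N'"
  using assms
proof (cases rule: edge_cases)
  case (i p q)
  then have "p \<in> N" "q \<in> N" "p \<noteq> q" using edge_N by auto
  then have "\<psi> p \<noteq> \<psi> q" using psi_eq by simp
  then show ?thesis using i \<open>p \<in> N\<close> \<open>q \<in> N\<close> by (simp add: N'_def)
next
  case (ii h)
  then have "h \<in> N" "t \<noteq> h" using edge_N by auto
  then have "\<psi> t \<noteq> \<psi> h" using psi_eq tN by simp
  then show ?thesis using ii \<open>h \<in> N\<close> tN by (simp add: N'_def)
next
  case (iii h)
  then have "h \<in> N" using edge_N by auto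
  then have "s \<noteq> \<psi> h" using psi_ne_s by metis
  then show ?thesis using iii \<open>h \<in> N\<close> by (simp add: N'_def)
next
  case iv
  then show ?thesis using psi_ne_s[OF tN] tN by (simp add: N'_def)
qed

definition lift where "lift e = (if t \<in> e then (if e - {t} \<subseteq> L then \<psi> ` e else insert s (\<psi> ` (e - {t}))) else \<psi> ` e)"

lemma phi_edge:
  assumes "f \<in> TE'" "f \<noteq> {\<psi> t, s}"
  shows "\<phi> ` f \<in> TE \<and> f = lift (\<phi> ` f)"
  using assms(1)
proof (cases rule: edge_cases)
  case (i p q)
  then have "p \<in> N" "q \<in> N" using edge_N by auto
  then have "\<phi> ` f = {p, q}" using i phi_psi by simp
  then show ?thesis using i by (simp add: lift_def)
next
  case (ii h)
  then have "h \<in> N" "t \<noteq> h" using edge_N by auto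
  then have "\<phi> ` f = {t, h}" using ii phi_psi tN by simp
  moreover have "{t, h} - {t} = {h}" using \<open>t \<noteq> h\<close> by auto
  ultimately show ?thesis using ii by (simp add: lift_def)
next
  case (iii h)
  then have "h \<in> N" "t \<noteq> h" using edge_N by auto
  then have "\<phi> ` f = {t, h}" using iii phi_psi phi_s by simp
  moreover have "{t, h} - {t} = {h}" using \<open>t \<noteq> h\<close> by auto
  ultimately show ?thesis using iii by (simp add: lift_def)
next
  case iv then show ?thesis using assms(2) by simp
qed

lemma phi_ts: "\<phi> ` {\<psi> t, s} = {t}" using phi_psi[OF tN] phi_s by simp

lemma TE'_ii: "{t, h} \<in> TE \<Longrightarrow> h \<in> L \<Longrightarrow> {\<psi> t, \<psi> h} \<in> TE'" unfolding TE'_def by blast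
lemma TE'_iii: "{t, h} \<in> TE \<Longrightarrow> h \<notin> L \<Longrightarrow> {s, \<psi> h} \<in> TE'" unfolding TE'_def by blast
lemma TE'_iv: "{\<psi> t, s} \<in> TE'" unfolding TE'_def by blast
lemma TE'_i: "{p, q} \<in> TE \<Longrightarrow> t \<notin> {p, q} \<Longrightarrow> {\<psi> p, \<psi> q} \<in> TE'"
proof -
  assume a: "{p, q} \<in> TE" "t \<notin> {p, q}"
  then have "\<psi> ` {p, q} \<in> TE'" unfolding TE'_def by blast
  then show ?thesis by simp
qed

abbreviation R' where "R' \<equiv> {(x, y). {x, y} \<in> TE'}"

lemma R'_sym: "(x, y) \<in> R'\<^sup>* \<Longrightarrow> (y, x) \<in> R'\<^sup>*"
proof -
  have "sym R'" unfolding sym_def by (auto simp: insert_commute)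
  then show "(x, y) \<in> R'\<^sup>* \<Longrightarrow> (y, x) \<in> R'\<^sup>*" using sym_rtrancl by (meson symD)
qed

lemma conn_t: "x \<in> N \<Longrightarrow> (\<psi> t, \<psi> x) \<in> R'\<^sup>*"
proof -
  assume x: "x \<in> N"
  have "(t, x) \<in> {(x, y). {x, y} \<in> TE}\<^sup>*" using stree_conn[OF T tN x] .
  then show ?thesis
  proof (induction rule: rtrancl_induct)
    case base then show ?case by simp
  next
    case (step y z)
    have e: "{y, z} \<in> TE" using step.hyps(2) by simp
    show ?case
    proof (cases "z = t")
      case True then show ?thesis by simp
    next
      case zt: False
      show ?thesis
      proof (cases "y = t")
        case True
        then have e2: "{t, z} \<in> TE" using e by simp
        show ?thesis
        proof (cases "z \<in> L")
          case True
          then have "(\<psi> t, \<psi> z) \<in> R'" using TE'_ii[OF e2] by simp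
          then show ?thesis by (rule r_into_rtrancl)
        next
          case False
          then have "(s, \<psi> z) \<in> R'" using TE'_iii[OF e2] by simp
          moreover have "(\<psi> t, s) \<in> R'" using TE'_iv by simp
          ultimately show ?thesis by (meson r_into_rtrancl rtrancl_into_rtrancl)
        qed
      next
        case False
        then have "(\<psi> y, \<psi> z) \<in> R'" using TE'_i[OF e] zt by simp
        then show ?thesis using step.IH by (rule rtrancl_into_rtrancl[rotated])
      qed
    qed
  qed
qed

lemma conn': "a \<in> N' \<Longrightarrow> b \<in> N' \<Longrightarrow> (a, b) \<in> R'\<^sup>*"
proof -
  have c: "y \<in> N' \<Longrightarrow> (\<psi> t, y) \<in> R'\<^sup>*" for y
  proof -
    assume "y \<in> N'"
    then have "y = s \<or> (\<exists>x\<in>N. y = \<psi> x)" unfolding N'_def by blast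
    then show ?thesis
    proof (elim disjE bexE)
      assume "y = s"
      then show ?thesis using TE'_iv by (simp add: r_into_rtrancl)
    next
      fix x assume "x \<in> N" "y = \<psi> x"
      then show ?thesis using conn_t by simp
    qed
  qed
  assume "a \<in> N'" "b \<in> N'"
  then show ?thesis using c[of a] c[of b] R'_sym by (meson rtrancl_trans)
qed

lemma phi_step:
  assumes e': "e' \<in> TE'" "e' \<noteq> {\<psi> t, s}" and xy: "(x, y) \<in> redge TE' e'"
  shows "(\<phi> x, \<phi> y) \<in> (redge TE (\<phi> ` e'))\<^sup>*"
proof -
  have f: "{x, y} \<in> TE'" "{x, y} \<noteq> e'" using xy by (auto simp: redge_def)
  show ?thesis
  proof (cases "{x, y} = {\<psi> t, s}")
    case True
    have m: "z \<in> {\<psi> t, s} \<Longrightarrow> \<phi> z = t" for z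
    proof -
      assume "z \<in> {\<psi> t, s}"
      then have "z = \<psi> t \<or> z = s" by simp
      then show ?thesis using phi_psi[OF tN] phi_s by (elim disjE) simp_all
    qed
    have "x \<in> {x, y}" "y \<in> {x, y}" by simp_all
    then have "x \<in> {\<psi> t, s}" "y \<in> {\<psi> t, s}" unfolding True .
    then have "\<phi> x = t" "\<phi> y = t" using m by simp_all
    then show ?thesis by simp
  next
    case False
    have a: "\<phi> ` {x, y} \<in> TE" "{x, y} = lift (\<phi> ` {x, y})" using phi_edge[OF f(1) False] by (rule conjunct1, rule conjunct2)
    have b: "e' = lift (\<phi> ` e')" using phi_edge[OF e'] by (rule conjunct2)
    have "\<phi> ` {x, y} \<noteq> \<phi> ` e'"
    proof
      assume eq: "\<phi> ` {x, y} = \<phi> ` e'"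
      have "{x, y} = lift (\<phi> ` {x, y})" by (rule a(2))
      also have "\<dots> = lift (\<phi> ` e')" by (simp only: eq)
      also have "\<dots> = e'" by (rule b[symmetric])
      finally have "{x, y} = e'" .
      then show False using f(2) by simp
    qed
    then have "(\<phi> x, \<phi> y) \<in> redge TE (\<phi> ` e')" using a(1) by (simp add: redge_def)
    then show ?thesis by (rule r_into_rtrancl)
  qed
qed

lemma phi_rt:
  assumes e': "e' \<in> TE'" "e' \<noteq> {\<psi> t, s}" and xy: "(x, y) \<in> (redge TE' e')\<^sup>*"
  shows "(\<phi> x, \<phi> y) \<in> (redge TE (\<phi> ` e'))\<^sup>*"
  using xy
proof (induction rule: rtrancl_induct)
  case base then show ?case by simp
next
  case (step y z)
  from step.IH phi_step[OF e' step.hyps(2)] show ?case by (rule rtrancl_trans)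
qed

definition P where "P = insert (\<psi> t) (\<psi> ` L)"
definition Q where "Q = insert s (\<psi> ` (N - {t} - L))"

lemma L_sub: "L \<subseteq> N - {t}" unfolding L_def by blast

lemma psi_P: "u \<in> N \<Longrightarrow> \<psi> u \<in> P \<longleftrightarrow> u = t \<or> u \<in> L"
proof -
  assume u: "u \<in> N"
  have "\<psi> u \<in> \<psi> ` L \<longleftrightarrow> u \<in> L" using u L_sub inj by (auto simp: inj_on_def)
  moreover have "\<psi> u = \<psi> t \<longleftrightarrow> u = t" using psi_eq[OF u tN] .
  ultimately show ?thesis unfolding P_def by blast
qed

lemma psi_Q: "u \<in> N \<Longrightarrow> \<psi> u \<in> Q \<longleftrightarrow> u \<noteq> t \<and> u \<notin> L"
proof -
  assume u: "u \<in> N"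
  have "\<psi> u \<in> \<psi> ` (N - {t} - L) \<longleftrightarrow> u \<in> N - {t} - L" using u inj by (auto simp: inj_on_def)
  moreover have "\<psi> u \<noteq> s" using psi_ne_s[OF u] .
  ultimately show ?thesis unfolding Q_def using u by blast
qed

lemma s_P: "s \<notin> P" unfolding P_def using sfresh L_sub tN by blast
lemma s_Q: "s \<in> Q" unfolding Q_def by simp

lemma L_edge: "{p, q} \<in> TE \<Longrightarrow> t \<notin> {p, q} \<Longrightarrow> p \<in> L \<Longrightarrow> q \<in> L"
proof -
  assume a: "{p, q} \<in> TE" "t \<notin> {p, q}" "p \<in> L"
  have q: "q \<in> N" using edge_N[OF a(1)] by simp
  have "comp_del_node N TE t q = comp_del_node N TE t p" using cdn_edge[OF a(1) a(2) q] .
  then show ?thesis using a q unfolding L_def cmp_def by auto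
qed

lemma P_closed:
  assumes xy: "(x, y) \<in> redge TE' {\<psi> t, s}" and x: "x \<in> P"
  shows "y \<in> P"
proof -
  have f: "{x, y} \<in> TE'" "{x, y} \<noteq> {\<psi> t, s}" using xy by (auto simp: redge_def)
  from f(1) show ?thesis
  proof (cases rule: edge_cases)
    case (i p q)
    have pq: "p \<in> N" "q \<in> N" using edge_N[OF i(2)] by auto
    have e2: "{q, p} \<in> TE" using i(2) by (simp add: insert_commute)
    from i(1) have "(x = \<psi> p \<and> y = \<psi> q) \<or> (x = \<psi> q \<and> y = \<psi> p)" by (simp add: doubleton_eq_iff)
    then show ?thesis
    proof (elim disjE conjE)
      assume "x = \<psi> p" "y = \<psi> q"
      then have "p \<in> L" using x psi_P[OF pq(1)] i(3) by simp
      then have "q \<in> L" using L_edge[OF i(2)] i(3,4) by simp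
      then show ?thesis using psi_P[OF pq(2)] \<open>y = \<psi> q\<close> by simp
    next
      assume "x = \<psi> q" "y = \<psi> p"
      then have "q \<in> L" using x psi_P[OF pq(2)] i(4) by simp
      then have "p \<in> L" using L_edge[OF e2] i(3,4) by simp
      then show ?thesis using psi_P[OF pq(1)] \<open>y = \<psi> p\<close> by simp
    qed
  next
    case (ii h)
    have "h \<in> N" using edge_N[OF ii(2)] by simp
    then have "\<psi> h \<in> P" "\<psi> t \<in> P" using psi_P ii(3) tN by auto
    moreover have "y = \<psi> t \<or> y = \<psi> h" using ii(1) by (auto simp: doubleton_eq_iff)
    ultimately show ?thesis by blast
  next
    case (iii h)
    have h: "h \<in> N" "t \<noteq> h" using edge_N[OF iii(2)] by auto
    have "\<psi> h \<notin> P" using psi_P[OF h(1)] h(2) iii(3) by simp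
    moreover have "x = s \<or> x = \<psi> h" using iii(1) by (auto simp: doubleton_eq_iff)
    ultimately show ?thesis using x s_P by blast
  next
    case iv then show ?thesis using f(2) by simp
  qed
qed

lemma Q_closed:
  assumes xy: "(x, y) \<in> redge TE' {\<psi> t, s}" and x: "x \<in> Q"
  shows "y \<in> Q"
proof -
  have f: "{x, y} \<in> TE'" "{x, y} \<noteq> {\<psi> t, s}" using xy by (auto simp: redge_def)
  from f(1) show ?thesis
  proof (cases rule: edge_cases)
    case (i p q)
    have pq: "p \<in> N" "q \<in> N" using edge_N[OF i(2)] by auto
    have e2: "{q, p} \<in> TE" using i(2) by (simp add: insert_commute)
    from i(1) have "(x = \<psi> p \<and> y = \<psi> q) \<or> (x = \<psi> q \<and> y = \<psi> p)" by (simp add: doubleton_eq_iff)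
    then show ?thesis
    proof (elim disjE conjE)
      assume "x = \<psi> p" "y = \<psi> q"
      then have "p \<notin> L" using x psi_Q[OF pq(1)] by simp
      then have "q \<notin> L" using L_edge[OF e2] i(3,4) by auto
      then show ?thesis using psi_Q[OF pq(2)] \<open>y = \<psi> q\<close> i(4) by simp
    next
      assume "x = \<psi> q" "y = \<psi> p"
      then have "q \<notin> L" using x psi_Q[OF pq(2)] by simp
      then have "p \<notin> L" using L_edge[OF i(2)] i(3,4) by auto
      then show ?thesis using psi_Q[OF pq(1)] \<open>y = \<psi> p\<close> i(3) by simp
    qed
  next
    case (ii h)
    have "h \<in> N" using edge_N[OF ii(2)] by simp
    then have "\<psi> h \<notin> Q" "\<psi> t \<notin> Q" using psi_Q ii(3) tN by auto
    moreover have "x = \<psi> t \<or> x = \<psi> h" using ii(1) by (auto simp: doubleton_eq_iff)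
    ultimately show ?thesis using x by blast
  next
    case (iii h)
    have h: "h \<in> N" "t \<noteq> h" using edge_N[OF iii(2)] by auto
    have "\<psi> h \<in> Q" using psi_Q[OF h(1)] h(2) iii(3) by simp
    moreover have "y = s \<or> y = \<psi> h" using iii(1) by (auto simp: doubleton_eq_iff)
    ultimately show ?thesis using s_Q by blast
  next
    case iv then show ?thesis using f(2) by simp
  qed
qed

lemma P_rt: "(x, y) \<in> (redge TE' {\<psi> t, s})\<^sup>* \<Longrightarrow> x \<in> P \<Longrightarrow> y \<in> P"
  by (induction rule: rtrancl_induct) (auto intro: P_closed)

lemma Q_rt: "(x, y) \<in> (redge TE' {\<psi> t, s})\<^sup>* \<Longrightarrow> x \<in> Q \<Longrightarrow> y \<in> Q"
  by (induction rule: rtrancl_induct) (auto intro: Q_closed)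

lemma bridge':
  assumes e: "{a, b} \<in> TE'"
  shows "(a, b) \<notin> (redge TE' {a, b})\<^sup>*"
proof (cases "{a, b} = {\<psi> t, s}")
  case True
  have ts: "(\<psi> t, s) \<notin> (redge TE' {\<psi> t, s})\<^sup>*"
  proof
    assume "(\<psi> t, s) \<in> (redge TE' {\<psi> t, s})\<^sup>*"
    then have "s \<in> P" using P_rt by (simp add: P_def)
    then show False using s_P by simp
  qed
  from True have "(a = \<psi> t \<and> b = s) \<or> (a = s \<and> b = \<psi> t)" by (auto simp: doubleton_eq_iff)
  then show ?thesis
  proof (elim disjE conjE)
    assume "a = \<psi> t" "b = s" then show ?thesis using ts by simp
  next
    assume ab: "a = s" "b = \<psi> t"
    show ?thesis
    proof
      assume "(a, b) \<in> (redge TE' {a, b})\<^sup>*"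
      then have "(b, a) \<in> (redge TE' {a, b})\<^sup>*" by (rule redge_sym_rt)
      then show False using ts ab True by simp
    qed
  qed
next
  case False
  have pe: "\<phi> ` {a, b} \<in> TE" using phi_edge[OF e False] by (rule conjunct1)
  show ?thesis
  proof
    assume "(a, b) \<in> (redge TE' {a, b})\<^sup>*"
    then have "(\<phi> a, \<phi> b) \<in> (redge TE (\<phi> ` {a, b}))\<^sup>*" using phi_rt[OF e False] by simp
    then show False using bridge[OF T] pe by simp
  qed
qed

lemma stree': "stree N' TE'"
  unfolding stree_def
proof (intro conjI ballI)
  show "finite N'" using finN by (simp add: N'_def)
  show "N' \<noteq> {}" by (simp add: N'_def)
  fix e assume "e \<in> TE'" then show "card e = 2" "e \<subseteq> N'" using TE'_edge by auto
next
  fix a b assume "a \<in> N'" "b \<in> N'" then show "(a, b) \<in> R'\<^sup>*" by (rule conn')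
next
  show "\<nexists>cs. tcycle TE' cs" using nocycle_from_bridges bridge' by blast
qed

lemma N'_cases: "y \<in> N' \<Longrightarrow> y = s \<or> (\<exists>u\<in>N. y = \<psi> u)"
  unfolding N'_def by blast

lemma B'_s: "B' s = B2" by (simp add: B'_def)
lemma B'_t: "B' (\<psi> t) = B1" using psi_ne_s[OF tN] by (simp add: B'_def)
lemma B'_psi: "u \<in> N \<Longrightarrow> u \<noteq> t \<Longrightarrow> B' (\<psi> u) = B u"
proof -
  assume u: "u \<in> N" "u \<noteq> t"
  have "\<psi> u \<noteq> s" using psi_ne_s[OF u(1)] .
  moreover have "\<psi> u \<noteq> \<psi> t" using psi_eq[OF u(1) tN] u(2) by simp
  ultimately show ?thesis using phi_psi[OF u(1)] by (simp add: B'_def)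
qed

lemma B12: "B1 \<union> B2 = B t" "B1 \<inter> B2 = {}" "B1 \<subseteq> B t" "B2 \<subseteq> B t"
  unfolding B1_def B2_def by auto

lemma B'_sub: "y \<in> N' \<Longrightarrow> B' y \<subseteq> B (\<phi> y)"
proof -
  assume y: "y \<in> N'"
  then have "y = s \<or> (\<exists>u\<in>N. y = \<psi> u)" by (rule N'_cases)
  then show ?thesis
  proof (elim disjE bexE)
    assume "y = s" then show ?thesis using B12 phi_s B'_s by simp
  next
    fix u assume u: "u \<in> N" "y = \<psi> u"
    show ?thesis
    proof (cases "u = t")
      case True then show ?thesis using u B'_t B12 phi_psi[OF tN] by simp
    next
      case False then show ?thesis using u B'_psi phi_psi by simp
    qed
  qed
qed

lemma bu_lift:
  assumes S: "S \<subseteq> N"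
  shows "bag_union B' {y \<in> N'. \<phi> y \<in> S} = bag_union B S"
proof
  show "bag_union B' {y \<in> N'. \<phi> y \<in> S} \<subseteq> bag_union B S"
  proof
    fix v assume "v \<in> bag_union B' {y \<in> N'. \<phi> y \<in> S}"
    then obtain y where y: "y \<in> N'" "\<phi> y \<in> S" "v \<in> B' y" unfolding bag_union_def by blast
    then have "v \<in> B (\<phi> y)" using B'_sub by blast
    then show "v \<in> bag_union B S" using y(2) unfolding bag_union_def by blast
  qed
next
  show "bag_union B S \<subseteq> bag_union B' {y \<in> N'. \<phi> y \<in> S}"
  proof
    fix v assume "v \<in> bag_union B S"
    then obtain u where u: "u \<in> S" "v \<in> B u" unfolding bag_union_def by blast
    have uN: "u \<in> N" using u S by blast
    show "v \<in> bag_union B' {y \<in> N'. \<phi> y \<in> S}"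
    proof (cases "u = t")
      case True
      have a: "\<psi> t \<in> {y \<in> N'. \<phi> y \<in> S}" using True u tN phi_psi[OF tN] by (simp add: N'_def)
      have b: "s \<in> {y \<in> N'. \<phi> y \<in> S}" using True u phi_s by (simp add: N'_def)
      have "v \<in> B1 \<or> v \<in> B2" using B12(1) u True by blast
      then show ?thesis
      proof
        assume "v \<in> B1" then show ?thesis using a B'_t unfolding bag_union_def by blast
      next
        assume "v \<in> B2" then show ?thesis using b B'_s unfolding bag_union_def by blast
      qed
    next
      case False
      have a: "\<psi> u \<in> {y \<in> N'. \<phi> y \<in> S}" using u uN phi_psi[OF uN] by (simp add: N'_def)
      then show ?thesis using B'_psi[OF uN False] u(2) unfolding bag_union_def by blast
    qed
  qed
qed

lemma tp': "tree_partition V E N' TE' B'"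
  unfolding tree_partition_def
proof (intro conjI ballI impI stree')
  have "{y \<in> N'. \<phi> y \<in> N} = N'" using phi_N by blast
  then have "bag_union B' N' = bag_union B N" using bu_lift[of N] by simp
  also have "\<dots> = V" using tp_union[OF tp] by (simp add: bag_union_def)
  finally show "(\<Union>t\<in>N'. B' t) = V" by (simp add: bag_union_def)
next
  fix y y' assume y: "y \<in> N'" "y' \<in> N'" "y \<noteq> y'"
  show "B' y \<inter> B' y' = {}"
  proof (rule ccontr)
    assume "B' y \<inter> B' y' \<noteq> {}"
    then obtain v where v: "v \<in> B' y" "v \<in> B' y'" by blast
    have "\<phi> y = \<phi> y'" using tp_disj[OF tp phi_N[OF y(1)] phi_N[OF y(2)]] B'_sub y v by blast
    have c: "y = s \<or> (\<exists>u\<in>N. y = \<psi> u)" "y' = s \<or> (\<exists>u\<in>N. y' = \<psi> u)" using N'_cases y by auto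
    show False
    proof (cases "y = s")
      case True
      then obtain u where u: "u \<in> N" "y' = \<psi> u" using c(2) y(3) by blast
      then have "u = t" using \<open>\<phi> y = \<phi> y'\<close> True phi_s phi_psi by simp
      then show False using v True u B'_s B'_t B12 by blast
    next
      case False
      then obtain u where u: "u \<in> N" "y = \<psi> u" using c(1) by blast
      show False
      proof (cases "y' = s")
        case True
        then have "u = t" using \<open>\<phi> y = \<phi> y'\<close> u phi_s phi_psi by simp
        then show False using v True u B'_s B'_t B12 by blast
      next
        case False
        then obtain u' where u': "u' \<in> N" "y' = \<psi> u'" using c(2) by blast
        then have "u = u'" using \<open>\<phi> y = \<phi> y'\<close> u phi_psi by simp
        then show False using u u' y(3) by simp
      qed
    qed
  qed
qed

lemma side_phi:
  assumes e': "e' \<in> TE'" "e' \<noteq> {\<psi> t, s}" and y: "y \<in> comp_del_edge N' TE' e' c"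
  shows "\<phi> y \<in> comp_del_edge N TE (\<phi> ` e') (\<phi> c)"
proof -
  have "y \<in> N'" "(c, y) \<in> (redge TE' e')\<^sup>*" using y by (auto simp: cde_def2)
  then show ?thesis using phi_rt[OF e'] phi_N by (simp add: cde_def2)
qed

lemma side_eq:
  assumes e: "{a, b} \<in> TE'" and ne: "{a, b} \<noteq> {\<psi> t, s}"
  shows "comp_del_edge N' TE' {a, b} a = {y \<in> N'. \<phi> y \<in> comp_del_edge N TE {\<phi> a, \<phi> b} (\<phi> a)}"
proof
  have im: "\<phi> ` {a, b} = {\<phi> a, \<phi> b}" by simp
  show "comp_del_edge N' TE' {a, b} a \<subseteq> {y \<in> N'. \<phi> y \<in> comp_del_edge N TE {\<phi> a, \<phi> b} (\<phi> a)}"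
  proof
    fix y assume y: "y \<in> comp_del_edge N' TE' {a, b} a"
    then have "y \<in> N'" by (simp add: cde_def2)
    moreover have "\<phi> y \<in> comp_del_edge N TE (\<phi> ` {a, b}) (\<phi> a)" using side_phi[OF e ne y] .
    ultimately show "y \<in> {y \<in> N'. \<phi> y \<in> comp_del_edge N TE {\<phi> a, \<phi> b} (\<phi> a)}" using im by simp
  qed
  show "{y \<in> N'. \<phi> y \<in> comp_del_edge N TE {\<phi> a, \<phi> b} (\<phi> a)} \<subseteq> comp_del_edge N' TE' {a, b} a"
  proof
    fix y assume y: "y \<in> {y \<in> N'. \<phi> y \<in> comp_del_edge N TE {\<phi> a, \<phi> b} (\<phi> a)}"
    have pe: "{\<phi> a, \<phi> b} \<in> TE" using phi_edge[OF e ne] im by simp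
    have "y \<in> comp_del_edge N' TE' {a, b} a \<union> comp_del_edge N' TE' {a, b} b"
      using sides_cover[OF stree' e] y by simp
    moreover have "y \<notin> comp_del_edge N' TE' {a, b} b"
    proof
      assume "y \<in> comp_del_edge N' TE' {a, b} b"
      then have "\<phi> y \<in> comp_del_edge N TE {\<phi> a, \<phi> b} (\<phi> b)" using side_phi[OF e ne] im by metis
      then show False using y sides_disj[OF T pe] by blast
    qed
    ultimately show "y \<in> comp_del_edge N' TE' {a, b} a" by blast
  qed
qed

lemma cde_sub: "comp_del_edge N TE e a \<subseteq> N" by (auto simp: cde_def2)

lemma cross_old:
  assumes e: "{a, b} \<in> TE'" and ne: "{a, b} \<noteq> {\<psi> t, s}"
  shows "cross_size E N' TE' B' a b \<le> k"
proof -
  have ne2: "{b, a} \<noteq> {\<psi> t, s}" "{b, a} \<in> TE'" using ne e by (simp_all add: insert_commute)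
  have pe: "{\<phi> a, \<phi> b} \<in> TE" using phi_edge[OF e ne] by simp
  have sa: "bag_union B' (comp_del_edge N' TE' {a, b} a) = bag_union B (comp_del_edge N TE {\<phi> a, \<phi> b} (\<phi> a))"
    using side_eq[OF e ne] bu_lift[OF cde_sub] by simp
  have "comp_del_edge N' TE' {b, a} b = {y \<in> N'. \<phi> y \<in> comp_del_edge N TE {\<phi> b, \<phi> a} (\<phi> b)}"
    using side_eq[OF ne2(2) ne2(1)] .
  then have "bag_union B' (comp_del_edge N' TE' {a, b} b) = bag_union B (comp_del_edge N TE {\<phi> a, \<phi> b} (\<phi> b))"
    using bu_lift[OF cde_sub] by (simp add: insert_commute)
  then have "cross_size E N' TE' B' a b = cross_size E N TE B (\<phi> a) (\<phi> b)"
    using sa by (simp add: cross_size_def)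
  also have "\<dots> \<le> k" using adh pe by simp
  finally show ?thesis .
qed

lemma PQ: "P \<subseteq> N'" "Q \<subseteq> N'" "P \<inter> Q = {}"
proof -
  show "P \<subseteq> N'" unfolding P_def N'_def using tN L_sub by blast
  show "Q \<subseteq> N'" unfolding Q_def N'_def by blast
  show "P \<inter> Q = {}"
  proof (rule ccontr)
    assume "P \<inter> Q \<noteq> {}"
    then obtain x where x: "x \<in> P" "x \<in> Q" by blast
    then have "x = \<psi> t \<or> (\<exists>l\<in>L. x = \<psi> l)" unfolding P_def by blast
    then show False
    proof (elim disjE bexE)
      assume "x = \<psi> t" then show False using x psi_Q[OF tN] by simp
    next
      fix l assume "l \<in> L" "x = \<psi> l"
      then show False using x psi_Q L_sub by blast
    qed
  qed
qed

lemma sides_ts: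
  "comp_del_edge N' TE' {\<psi> t, s} (\<psi> t) = P" "comp_del_edge N' TE' {\<psi> t, s} s = Q"
proof -
  let ?A = "comp_del_edge N' TE' {\<psi> t, s} (\<psi> t)"
  let ?B = "comp_del_edge N' TE' {\<psi> t, s} s"
  have tP: "\<psi> t \<in> P" by (simp add: P_def)
  have AP: "?A \<subseteq> P" using P_rt tP by (auto simp: cde_def2)
  have BQ: "?B \<subseteq> Q" using Q_rt s_Q by (auto simp: cde_def2)
  have cov: "x \<in> N' \<Longrightarrow> x \<in> ?A \<union> ?B" for x using sides_cover[OF stree' TE'_iv] by simp
  show "?A = P"
  proof
    show "P \<subseteq> ?A"
    proof
      fix x assume "x \<in> P"
      then have "x \<in> N'" "x \<notin> Q" using PQ by blast+
      then show "x \<in> ?A" using cov BQ by blast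
    qed
  qed (rule AP)
  show "?B = Q"
  proof
    show "Q \<subseteq> ?B"
    proof
      fix x assume "x \<in> Q"
      then have "x \<in> N'" "x \<notin> P" using PQ by blast+
      then show "x \<in> ?B" using cov AP by blast
    qed
  qed (rule BQ)
qed

abbreviation M where "M \<equiv> torso_map N TE B t"
abbreviation Z where "Z \<equiv> torso_V N TE B t"

lemma buP: "v \<in> bag_union B' P \<Longrightarrow> v \<in> V \<and> M v \<in> X"
proof -
  assume "v \<in> bag_union B' P"
  then obtain y where y: "y \<in> P" "v \<in> B' y" unfolding bag_union_def by blast
  then have "y = \<psi> t \<or> (\<exists>l\<in>L. y = \<psi> l)" unfolding P_def by blast
  then show ?thesis
  proof (elim disjE bexE)
    assume "y = \<psi> t"
    then have "v \<in> B1" using y B'_t by simp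
    then have "v \<in> B t" "Inl v \<in> X" unfolding B1_def by auto
    moreover from this(1) have "M v = Inl v" by (rule M_inl)
    ultimately show ?thesis using tp_bag_sub[OF tp tN] by auto
  next
    fix l assume l: "l \<in> L" "y = \<psi> l"
    then have lN: "l \<in> N" "l \<noteq> t" using L_sub by auto
    then have "v \<in> B l" using y l B'_psi by simp
    then show ?thesis using M_inr[OF tp lN tN] tp_bag_sub[OF tp lN(1)] l(1)
      unfolding L_def cmp_def by auto
  qed
qed

lemma buQ: "v \<in> bag_union B' Q \<Longrightarrow> v \<in> V \<and> M v \<in> Z - X"
proof -
  assume "v \<in> bag_union B' Q"
  then obtain y where y: "y \<in> Q" "v \<in> B' y" unfolding bag_union_def by blast
  then have "y = s \<or> (\<exists>u\<in>N - {t} - L. y = \<psi> u)" unfolding Q_def by blast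
  then show ?thesis
  proof (elim disjE bexE)
    assume "y = s"
    then have "v \<in> B2" using y B'_s by simp
    then have "v \<in> B t" "Inl v \<notin> X" unfolding B2_def B1_def by auto
    moreover from this(1) have "M v = Inl v" by (rule M_inl)
    ultimately show ?thesis using tp_bag_sub[OF tp tN] unfolding torso_V_def by auto
  next
    fix u assume u: "u \<in> N - {t} - L" "y = \<psi> u"
    then have uN: "u \<in> N" "u \<noteq> t" by auto
    then have "v \<in> B u" using y u B'_psi by simp
    moreover have "comp_del_node N TE t u \<in> comps_node N TE t" using uN unfolding comps_node_def by blast
    moreover have "Inr (comp_del_node N TE t u) \<notin> X" using u unfolding L_def cmp_def by auto
    ultimately show ?thesis using M_inr[OF tp uN tN] tp_bag_sub[OF tp uN(1)]
      unfolding torso_V_def by auto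
  qed
qed

lemma cut_PQ: "cut_edges E (bag_union B' P) (bag_union B' Q) \<le> k"
proof -
  have "cut_edges E (bag_union B' P) (bag_union B' Q)
     \<le> size (filter_mset (\<lambda>e. card (M ` e) = 2 \<and> M ` e \<inter> X \<noteq> {} \<and> M ` e \<inter> (Z - X) \<noteq> {}) E)"
    unfolding cut_edges_def
  proof (rule size_filter_mono)
    fix e assume e: "e \<in># E" and c: "e \<inter> bag_union B' P \<noteq> {} \<and> e \<inter> bag_union B' Q \<noteq> {}"
    then obtain a b where ab: "a \<in> e" "a \<in> bag_union B' P" "b \<in> e" "b \<in> bag_union B' Q" by blast
    have Ma: "M a \<in> X" using buP[OF ab(2)] by simp
    have Mb: "M b \<in> Z - X" using buQ[OF ab(4)] by simp
    have "a \<noteq> b" using Ma Mb by auto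
    obtain p q where pq: "e = {p, q}" "p \<noteq> q" using mgraph_edge[OF g e] by blast
    have "e = {a, b}" using pq ab(1,3) \<open>a \<noteq> b\<close> by auto
    moreover have "M a \<noteq> M b" using Ma Mb by auto
    ultimately show "card (M ` e) = 2 \<and> M ` e \<inter> X \<noteq> {} \<and> M ` e \<inter> (Z - X) \<noteq> {}"
      using Ma Mb by auto
  qed
  also have "\<dots> = cut_edges (torso_E E N TE B t) X (Z - X)"
    unfolding cut_edges_def torso_E_def by (simp add: filter_filter_mset filter_mset_image_mset conj_assoc)
  also have "\<dots> \<le> k" by (rule cutX)
  finally show ?thesis .
qed

lemma cut_sym: "cut_edges E A C = cut_edges E C A"
  unfolding cut_edges_def by (simp add: conj_commute)

lemma adh': "{a, b} \<in> TE' \<Longrightarrow> cross_size E N' TE' B' a b \<le> k"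
proof -
  assume e: "{a, b} \<in> TE'"
  show ?thesis
  proof (cases "{a, b} = {\<psi> t, s}")
    case False then show ?thesis using cross_old[OF e] by simp
  next
    case True
    then have "(a = \<psi> t \<and> b = s) \<or> (a = s \<and> b = \<psi> t)" by (auto simp: doubleton_eq_iff)
    then show ?thesis
    proof (elim disjE conjE)
      assume "a = \<psi> t" "b = s"
      then show ?thesis using cut_PQ sides_ts by (simp add: cross_size_def)
    next
      assume ab: "a = s" "b = \<psi> t"
      have "{s, \<psi> t} = {\<psi> t, s}" by (simp add: insert_commute)
      then show ?thesis using ab cut_PQ sides_ts cut_sym by (simp add: cross_size_def)
    qed
  qed
qed

lemma wit': "\<forall>y\<in>N'. \<exists>v\<in>B' y. deg E v \<ge> k + 1"
proof
  fix y assume y: "y \<in> N'"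
  then have "y = s \<or> (\<exists>u\<in>N. y = \<psi> u)" by (rule N'_cases)
  then show "\<exists>v\<in>B' y. deg E v \<ge> k + 1"
  proof (elim disjE bexE)
    assume "y = s"
    obtain v where "v \<in> B t" "Inl v \<notin> X" "deg E v \<ge> k + 1" using v2 by blast
    then have "v \<in> B2" unfolding B2_def B1_def by simp
    then show ?thesis using \<open>y = s\<close> B'_s \<open>deg E v \<ge> k + 1\<close> by auto
  next
    fix u assume u: "u \<in> N" "y = \<psi> u"
    show ?thesis
    proof (cases "u = t")
      case True
      obtain v where "v \<in> B t" "Inl v \<in> X" "deg E v \<ge> k + 1" using v1 by blast
      then have "v \<in> B1" unfolding B1_def by simp
      then show ?thesis using u True B'_t \<open>deg E v \<ge> k + 1\<close> by auto
    next
      case False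
      then show ?thesis using u B'_psi wit by simp
    qed
  qed
qed

lemma ktight': "k_tight k V E N' TE' B'"
  using ktight_intro[OF g tp'] adh' wit' by blast

lemma weight': "weight k E N' B' = weight k E N B - 1"
proof -
  let ?h = "\<lambda>A. {v \<in> A. deg E v \<ge> k + 1}"
  have "finite V" using g by (simp add: mgraph_def)
  then have finBt: "finite (B t)" by (rule finite_subset[OF tp_bag_sub[OF tp tN]])
  have c12: "card (?h B1) + card (?h B2) = card (?h (B t))"
  proof -
    have "?h B1 \<union> ?h B2 = ?h (B t)" "?h B1 \<inter> ?h B2 = {}" using B12 by auto
    moreover have "finite (?h B1)" "finite (?h B2)"
    proof -
      have "?h B1 \<subseteq> B t" "?h B2 \<subseteq> B t" using B12(3,4) by auto
      then show "finite (?h B1)" "finite (?h B2)" using finBt by (simp_all add: finite_subset)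
    qed
    ultimately show ?thesis using card_Un_disjoint[of "?h B1" "?h B2"] by simp
  qed
  let ?f = "\<lambda>y. int (s_count k E B' y) - 1"
  let ?g = "\<lambda>u. int (s_count k E B u) - 1"
  have fin': "finite (\<psi> ` N)" using finN by simp
  have "weight k E N' B' = sum ?f (insert s (\<psi> ` N))"
    unfolding weight_def N'_def ..
  also have "\<dots> = ?f s + sum ?f (\<psi> ` N)" using sum.insert[OF fin' sfresh] .
  also have "sum ?f (\<psi> ` N) = sum (?f \<circ> \<psi>) N" using inj by (rule sum.reindex)
  also have "\<dots> = (?f \<circ> \<psi>) t + sum (?f \<circ> \<psi>) (N - {t})" using sum.remove[OF finN tN] .
  also have "sum (?f \<circ> \<psi>) (N - {t}) = sum ?g (N - {t})"
  proof (rule sum.cong)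
    fix u assume "u \<in> N - {t}"
    then have "B' (\<psi> u) = B u" using B'_psi by simp
    then show "(?f \<circ> \<psi>) u = ?g u" by (simp add: s_count_def)
  qed simp
  finally have w1: "weight k E N' B' = ?f s + (?f (\<psi> t) + sum ?g (N - {t}))" by simp
  have w2: "weight k E N B = ?g t + sum ?g (N - {t})"
    unfolding weight_def using sum.remove[OF finN tN] .
  have "?f s + ?f (\<psi> t) = ?g t - 1"
  proof -
    have "s_count k E B' s = card (?h B2)" using B'_s by (simp add: s_count_def)
    moreover have "s_count k E B' (\<psi> t) = card (?h B1)" using B'_t by (simp add: s_count_def)
    moreover have "s_count k E B t = card (?h (B t))" by (simp add: s_count_def)
    ultimately show ?thesis using c12 by simp
  qed
  then show ?thesis using w1 w2 by simp
qed

end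



theorem mainTheorem7:
  fixes V :: "'v set" and E :: "'v set multiset" and k :: nat
    and N :: "'n set" and TE :: "'n set set" and B :: "'n \<Rightarrow> 'v set"
  assumes "mgraph V E"
    and "k_tight k V E N TE B"
    and "\<exists>t\<in>N. k_splittable k E N TE B t"
  shows "\<exists>(N' :: nat set) TE' B'. k_tight k V E N' TE' B' \<and> weight k E N' B' < weight k E N B"
proof -
  note g = assms(1) and kt = assms(2)
  have tp: "tree_partition V E N TE B" and adh: "\<forall>a b. {a, b} \<in> TE \<longrightarrow> cross_size E N TE B a b \<le> k"
    using kt unfolding k_tight_def by auto
  have wit: "\<forall>u\<in>N. \<exists>v\<in>B u. deg E v \<ge> k + 1" using strength_witness[OF g kt] by blast
  obtain t where tN: "t \<in> N" and sp: "k_splittable k E N TE B t" using assms(3) by blast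
  let ?Z = "torso_V N TE B t" and ?EZ = "torso_E E N TE B t"
  obtain X where XZ: "X \<subseteq> ?Z" and cutX: "cut_edges ?EZ X (?Z - X) \<le> k"
    and x: "\<exists>x\<in>X. deg ?EZ x \<ge> k + 1" and y: "\<exists>y\<in>?Z - X. deg ?EZ y \<ge> k + 1"
    using sp unfolding k_splittable_def Let_def by blast
  have inl: "\<exists>v\<in>B t. z = Inl v \<and> deg E v \<ge> k + 1" if z: "z \<in> ?Z" "deg ?EZ z \<ge> k + 1" for z
  proof (cases z)
    case (Inl v)
    then have v: "v \<in> B t" using z(1) unfolding torso_V_def by auto
    then show ?thesis using z(2) deg_inl[where N=N and TE=TE and B=B and t=t, OF g v] Inl by auto
  next
    case (Inr C)
    then have "C \<in> comps_node N TE t" using z(1) unfolding torso_V_def by auto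
    then have "deg ?EZ z \<le> k" using deg_inr[OF g tp tN adh] Inr by simp
    then show ?thesis using z(2) by simp
  qed
  have v1: "\<exists>v\<in>B t. Inl v \<in> X \<and> deg E v \<ge> k + 1"
  proof -
    obtain z where "z \<in> X" "deg ?EZ z \<ge> k + 1" using x by blast
    moreover then obtain v where "v \<in> B t" "z = Inl v" "deg E v \<ge> k + 1" using inl XZ by blast
    ultimately show ?thesis by blast
  qed
  have v2: "\<exists>v\<in>B t. Inl v \<notin> X \<and> deg E v \<ge> k + 1"
  proof -
    obtain z where "z \<in> ?Z - X" "deg ?EZ z \<ge> k + 1" using y by blast
    moreover then obtain v where "v \<in> B t" "z = Inl v" "deg E v \<ge> k + 1" using inl by blast
    ultimately show ?thesis by blast
  qed
  have finN: "finite N" using tp_stree[OF tp] by (simp add: stree_def)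
  obtain f :: "'n \<Rightarrow> nat" where inj: "inj_on f N" using finite_imp_inj_to_nat_seg[OF finN] by blast
  obtain s :: nat where sf: "s \<notin> f ` N" using ex_new_if_finite[OF infinite_UNIV_nat] finN by blast
  interpret S: split V E k N TE B t X f s
    using g tp adh wit tN XZ cutX v1 v2 inj sf by unfold_locales
  show ?thesis using S.ktight' S.weight' by (intro exI[of _ S.N'] exI[of _ S.TE'] exI[of _ S.B']) simp
qed


end
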